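(* Let $G$ be a graph of order $n$ with adjacency eigenvalues $\lambda_1(G)\ge\cdots\ge\lambda_n(G)$ and negative inertia $\nu^-=\nu^-(G)$. Let $F$ be a clique partition of $G$ and let $t_i^F$ be the $i$th largest clique-degree of $G$ with respect to $F$. Then for $1\le i\le\nu^-$, $$\lambda_{n-i+1}(G)\ge -t_i^F.$$ Equality holds if $G$ is clique-regular with respect to $F$ and $\nu^-=n-|F|$.
   Context: All graphs are finite and simple. A clique partition of $G$ is a set $F$ of cliques (sets of pairwise adjacent vertices) such that every edge lies in exactly one clique of $F$. The clique-degree of a vertex is the number of cliques of $F$ containing it; $t_1^F\ge\cdots\ge t_n^F$ are the clique-degrees in non-increasing order. $G$ is clique-regular with respect to $F$ if all clique-degrees are equal. $\nu^-(G)$ is the number of negative adjacency eigenvalues. *)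

theory Defs
  imports "Jordan_Normal_Form.Char_Poly"
begin

text \<open>A finite simple graph of order n: vertex set {0..<n}, edge relation E
  (only its restriction to the vertex set matters) which is symmetric and irreflexive.\<close>
definition simple_graph :: "nat \<Rightarrow> (nat \<Rightarrow> nat \<Rightarrow> bool) \<Rightarrow> bool" where
  "simple_graph n E \<longleftrightarrow> (\<forall>u<n. \<forall>v<n. E u v \<longleftrightarrow> E v u) \<and> (\<forall>v<n. \<not> E v v)"

definition adj_matrix :: "nat \<Rightarrow> (nat \<Rightarrow> nat \<Rightarrow> bool) \<Rightarrow> real mat" where
  "adj_matrix n E = mat n n (\<lambda>(i,j). if E i j then 1 else 0)"

definition adj_eigenvalues :: "nat \<Rightarrow> (nat \<Rightarrow> nat \<Rightarrow> bool) \<Rightarrow> real multiset" where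
  "adj_eigenvalues n E = proots (char_poly (adj_matrix n E))"

definition adj_eig :: "nat \<Rightarrow> (nat \<Rightarrow> nat \<Rightarrow> bool) \<Rightarrow> nat \<Rightarrow> real" where
  "adj_eig n E k = rev (sorted_list_of_multiset (adj_eigenvalues n E)) ! (k - 1)"

definition neg_inertia :: "nat \<Rightarrow> (nat \<Rightarrow> nat \<Rightarrow> bool) \<Rightarrow> nat" where
  "neg_inertia n E = size (filter_mset (\<lambda>x. x < 0) (adj_eigenvalues n E))"

definition is_clique :: "nat \<Rightarrow> (nat \<Rightarrow> nat \<Rightarrow> bool) \<Rightarrow> nat set \<Rightarrow> bool" where
  "is_clique n E C \<longleftrightarrow> C \<subseteq> {0..<n} \<and> (\<forall>u\<in>C. \<forall>v\<in>C. u \<noteq> v \<longrightarrow> E u v)"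

definition clique_partition :: "nat \<Rightarrow> (nat \<Rightarrow> nat \<Rightarrow> bool) \<Rightarrow> nat set set \<Rightarrow> bool" where
  "clique_partition n E F \<longleftrightarrow> (\<forall>C\<in>F. is_clique n E C) \<and>
     (\<forall>u<n. \<forall>v<n. E u v \<longrightarrow> (\<exists>!C. C \<in> F \<and> u \<in> C \<and> v \<in> C))"

definition clique_degree :: "nat set set \<Rightarrow> nat \<Rightarrow> nat" where
  "clique_degree F v = card {C \<in> F. v \<in> C}"

definition sorted_clique_degree :: "nat \<Rightarrow> nat set set \<Rightarrow> nat \<Rightarrow> nat" where
  "sorted_clique_degree n F i = rev (sort (map (clique_degree F) [0..<n])) ! (i - 1)"

definition clique_regular :: "nat \<Rightarrow> nat set set \<Rightarrow> bool" where
  "clique_regular n F \<longleftrightarrow> (\<exists>k. \<forall>v<n. clique_degree F v = k)"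

end

theory Submission
  imports Defs
begin
lemma sym_swap:
  fixes A :: "nat \<Rightarrow> nat \<Rightarrow> real"
  assumes "\<And>i j. i < n \<Longrightarrow> j < n \<Longrightarrow> A i j = A j i"
  shows "(\<Sum>i<n. a i * (\<Sum>j<n. A i j * b j)) = (\<Sum>i<n. b i * (\<Sum>j<n. A i j * a j))"
proof -
  have "(\<Sum>i<n. a i * (\<Sum>j<n. A i j * b j)) = (\<Sum>i<n. \<Sum>j<n. a i * A i j * b j)"
    by (simp add: sum_distrib_left mult.assoc)
  also have "\<dots> = (\<Sum>j<n. \<Sum>i<n. a i * A i j * b j)" by (rule sum.swap)
  also have "\<dots> = (\<Sum>j<n. b j * (\<Sum>i<n. A j i * a i))"
    by (simp add: sum_distrib_left assms mult.commute mult.left_commute)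
  finally show ?thesis .
qed

lemma real_eigen:
  fixes A :: "real mat"
  assumes A: "A \<in> carrier_mat n n" and n: "0 < n"
    and sym: "\<And>i j. i < n \<Longrightarrow> j < n \<Longrightarrow> A $$ (i,j) = A $$ (j,i)"
  shows "\<exists>e v. v \<in> carrier_vec n \<and> v \<noteq> 0\<^sub>v n \<and> A *\<^sub>v v = e \<cdot>\<^sub>v v"
proof -
  define Ac where "Ac = map_mat complex_of_real A"
  have Ac: "Ac \<in> carrier_mat n n" using A by (simp add: Ac_def)
  obtain as where as: "char_poly Ac = (\<Prod> a \<leftarrow> as. [:- a, 1:])" "length as = n"
    using char_poly_factorized[OF Ac] by blast
  define z where "z = as ! 0"
  have "z \<in> set as" using as(2) n by (simp add: z_def)
  hence "poly (char_poly Ac) z = 0" unfolding as(1)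
    by (simp add: poly_prod_list prod_list_zero_iff)
  hence "eigenvalue Ac z" using eigenvalue_root_char_poly[OF Ac] by simp
  then obtain w where w: "eigenvector Ac w z" unfolding eigenvalue_def by blast
  have wc: "w \<in> carrier_vec n" and w0: "w \<noteq> 0\<^sub>v n" and ew: "Ac *\<^sub>v w = z \<cdot>\<^sub>v w"
    using w Ac unfolding eigenvector_def by auto
  define a where "a = (\<lambda>i. Re (w $ i))"
  define b where "b = (\<lambda>i. Im (w $ i))"
  define x where "x = Re z"
  define y where "y = Im z"
  have comp: "(\<Sum>j<n. complex_of_real (A $$ (i,j)) * w $ j) = z * w $ i" if i: "i < n" for i
  proof -
    have "(Ac *\<^sub>v w) $ i = z * w $ i" using ew i wc by simp
    moreover have "(Ac *\<^sub>v w) $ i = (\<Sum>j<n. complex_of_real (A $$ (i,j)) * w $ j)"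
      using i Ac A wc by (simp add: Ac_def scalar_prod_def lessThan_atLeast0)
    ultimately show ?thesis by simp
  qed
  have ra: "(\<Sum>j<n. A $$ (i,j) * a j) = x * a i - y * b i" if i: "i < n" for i
  proof -
    have "Re (\<Sum>j<n. complex_of_real (A $$ (i,j)) * w $ j) = Re (z * w $ i)" using comp[OF i] by simp
    thus ?thesis by (simp add: a_def b_def x_def y_def Re_sum)
  qed
  have rb: "(\<Sum>j<n. A $$ (i,j) * b j) = x * b i + y * a i" if i: "i < n" for i
  proof -
    have "Im (\<Sum>j<n. complex_of_real (A $$ (i,j)) * w $ j) = Im (z * w $ i)" using comp[OF i] by simp
    thus ?thesis by (simp add: a_def b_def x_def y_def Im_sum algebra_simps)
  qed
  have "(\<Sum>i<n. a i * (\<Sum>j<n. A $$ (i,j) * b j)) = (\<Sum>i<n. b i * (\<Sum>j<n. A $$ (i,j) * a j))"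
    by (rule sym_swap, rule sym)
  hence "(\<Sum>i<n. a i * (x * b i + y * a i)) = (\<Sum>i<n. b i * (x * a i - y * b i))"
    using ra rb by simp
  hence "y * (\<Sum>i<n. a i ^ 2 + b i ^ 2) = 0"
    by (simp add: sum_distrib_left sum.distrib sum_subtractf algebra_simps power2_eq_square)
  moreover have "(\<Sum>i<n. a i ^ 2 + b i ^ 2) > 0"
  proof -
    obtain k where k: "k < n" "w $ k \<noteq> 0" using w0 wc by (metis carrier_vecD eq_vecI index_zero_vec)
    hence "a k ^ 2 + b k ^ 2 > 0" unfolding a_def b_def
      using complex_neq_0 by blast
    thus ?thesis by (intro sum_pos2[of _ k]) (use k in auto)
  qed
  ultimately have y0: "y = 0" by simp
  show ?thesis
  proof (cases "\<exists>k<n. a k \<noteq> 0")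
    case True
    then obtain k where k: "k < n" "a k \<noteq> 0" by blast
    have nz: "vec n a \<noteq> 0\<^sub>v n"
    proof
      assume "vec n a = 0\<^sub>v n"
      hence "vec n a $ k = 0\<^sub>v n $ k" by simp
      thus False using k by simp
    qed
    show ?thesis
      by (rule exI[of _ x], rule exI[of _ "vec n a"])
        (use nz ra y0 A in \<open>auto simp: scalar_prod_def lessThan_atLeast0 intro!: eq_vecI\<close>)
  next
    case False
    obtain k where k: "k < n" "w $ k \<noteq> 0" using w0 wc by (metis carrier_vecD eq_vecI index_zero_vec)
    with False have bk: "b k \<noteq> 0" unfolding a_def b_def by (simp add: complex_eq_iff)
    have nz: "vec n b \<noteq> 0\<^sub>v n"
    proof
      assume "vec n b = 0\<^sub>v n"
      hence "vec n b $ k = 0\<^sub>v n $ k" by simp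
      thus False using k bk by simp
    qed
    show ?thesis
      by (rule exI[of _ x], rule exI[of _ "vec n b"])
        (use nz rb y0 A in \<open>auto simp: scalar_prod_def lessThan_atLeast0 intro!: eq_vecI\<close>)
  qed
qed

lemma sum_delta_left: assumes i: "i < (n::nat)" shows "(\<Sum>k<n. (if k = i then 1 else 0) * f k) = (f i :: real)"
  using i by (simp add: if_distrib[of "\<lambda>x. x * _"] cong: if_cong)

lemma sum_delta_right: "i < (n::nat) \<Longrightarrow> (\<Sum>k<n. f k * (if k = i then 1 else 0)) = (f i :: real)"
  using sum_delta_left[of i n f] by (simp add: mult.commute)

lemma householder:
  fixes u :: "real vec"
  assumes u: "u \<in> carrier_vec n" and n: "0 < n" and nu: "u \<bullet> u = 1"
  shows "\<exists>W \<in> carrier_mat n n. transpose_mat W * W = 1\<^sub>m n \<and> col W 0 = u"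
proof -
  define h where "h = (\<lambda>k. u $ k - (if k = 0 then 1 else 0))"
  define s where "s = (\<Sum>k<n. h k ^ 2)"
  have uu: "(\<Sum>k<n. u $ k ^ 2) = 1" using nu u by (simp add: scalar_prod_def lessThan_atLeast0 power2_eq_square)
  have "s = (\<Sum>k<n. u $ k ^ 2) - 2 * (\<Sum>k<n. u $ k * (if k = 0 then 1 else 0)) + (\<Sum>k<n. (if k = 0 then 1 else 0))"
  proof -
    have "h k ^ 2 = u $ k ^ 2 - 2 * (u $ k * (if k = 0 then 1 else 0)) + (if k = 0 then 1 else 0)" for k
      by (simp add: h_def power2_eq_square algebra_simps)
    thus ?thesis unfolding s_def by (simp add: sum.distrib sum_subtractf sum_distrib_left)
  qed
  also have "\<dots> = 2 - 2 * u $ 0"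
  proof -
    have "(\<Sum>k<n. u $ k * (if k = 0 then 1 else 0)) = (\<Sum>k<n. (if k = 0 then 1 else 0) * u $ k)"
      by (simp add: mult.commute)
    also have "\<dots> = u $ 0" using n by (rule sum_delta_left)
    finally show ?thesis using uu n by simp
  qed
  finally have s2: "s = 2 - 2 * u $ 0" .
  show ?thesis
  proof (cases "s = 0")
    case True
    have "h k = 0" if "k < n" for k
    proof -
      have "h k ^ 2 = 0" using True unfolding s_def
        using sum_nonneg_eq_0_iff[of "{..<n}" "\<lambda>k. h k ^ 2"] that by auto
      thus ?thesis by simp
    qed
    hence "col (1\<^sub>m n) 0 = u" using u n by (intro eq_vecI) (auto simp: h_def split: if_splits)
    thus ?thesis by (intro bexI[of _ "1\<^sub>m n"]) auto
  next
    case False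
    have spos: "s > 0" using False unfolding s_def by (metis order_le_neq_trans sum_nonneg zero_le_power2)
    define t where "t = 2 / s"
    define W where "W = mat n n (\<lambda>(i,j). (if i = j then 1 else 0) - t * h i * h j)"
    have W: "W \<in> carrier_mat n n" by (simp add: W_def)
    have "transpose_mat W * W = 1\<^sub>m n"
    proof (rule eq_matI)
      fix i j assume ij: "i < dim_row (1\<^sub>m n)" "j < dim_col (1\<^sub>m n)"
      hence i: "i < n" and j: "j < n" by auto
      have "(transpose_mat W * W) $$ (i,j) = (\<Sum>k<n. W $$ (k,i) * W $$ (k,j))"
        using i j W by (simp add: scalar_prod_def lessThan_atLeast0)
      also have "\<dots> = (\<Sum>k<n. ((if k = i then 1 else 0) - t * h k * h i) * ((if k = j then 1 else 0) - t * h k * h j))"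
        by (rule sum.cong) (auto simp: W_def i j)
      also have "\<dots> = (\<Sum>k<n. (if k = i then 1 else 0) * (if k = j then 1 else 0))
           - t * h i * (\<Sum>k<n. (if k = j then 1 else 0) * h k)
           - t * h j * (\<Sum>k<n. (if k = i then 1 else 0) * h k)
           + t * t * h i * h j * s"
        unfolding s_def
        by (simp add: algebra_simps sum.distrib sum_subtractf sum_distrib_left power2_eq_square)
      also have "\<dots> = (if i = j then 1 else 0) - 2 * t * h i * h j + t * t * s * h i * h j"
        using i j by (simp add: sum_delta_left sum_delta_right algebra_simps)
      also have "t * t * s = 2 * t" using spos by (simp add: t_def power2_eq_square)
      finally show "(transpose_mat W * W) $$ (i,j) = 1\<^sub>m n $$ (i,j)" using i j by simp
    qed (use W in auto)
    moreover have "col W 0 = u"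
    proof (rule eq_vecI)
      have th: "t * h 0 = -1" using s2 spos n by (simp add: t_def h_def field_simps)
      fix i assume "i < dim_vec u"
      hence i: "i < n" using u by auto
      have "col W 0 $ i = (if i = 0 then 1 else 0) - (t * h 0) * h i" using i n by (simp add: W_def)
      also have "\<dots> = u $ i" unfolding th by (simp add: h_def)
      finally show "col W 0 $ i = u $ i" .
    qed (use W u in auto)
    ultimately show ?thesis using W by blast
  qed
qed

definition symm :: "nat \<Rightarrow> real mat \<Rightarrow> bool" where
  "symm n A \<longleftrightarrow> (\<forall>i<n. \<forall>j<n. A $$ (i,j) = A $$ (j,i))"

lemma symm_transpose: "A \<in> carrier_mat n n \<Longrightarrow> symm n A \<Longrightarrow> transpose_mat A = A"
  unfolding symm_def by (intro eq_matI) auto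

lemma transpose_symm: "A \<in> carrier_mat n n \<Longrightarrow> transpose_mat A = A \<Longrightarrow> symm n A"
  unfolding symm_def by (metis carrier_matD index_transpose_mat(1))

lemma assoc_helper:
  assumes "(Xt :: 'a :: comm_ring_1 mat) \<in> carrier_mat n n" "Wt \<in> carrier_mat n n" "A \<in> carrier_mat n n"
    "W \<in> carrier_mat n n" "X \<in> carrier_mat n n"
  shows "Xt * Wt * A * (W * X) = Xt * (Wt * A * W) * X"
  using assms by (simp add: assoc_mult_mat[of _ n n _ n _ n])

lemma spectral:
  fixes A :: "real mat"
  assumes "A \<in> carrier_mat n n" "symm n A"
  shows "\<exists>P \<in> carrier_mat n n. transpose_mat P * P = 1\<^sub>m n \<and> diagonal_mat (transpose_mat P * A * P)"
  using assms
proof (induction n arbitrary: A)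
  case 0
  show ?case by (rule bexI[of _ "1\<^sub>m 0"]) (auto simp: diagonal_mat_def)
next
  case (Suc m)
  have A: "A \<in> carrier_mat (Suc m) (Suc m)" by fact
  obtain e v where v: "v \<in> carrier_vec (Suc m)" "v \<noteq> 0\<^sub>v (Suc m)" "A *\<^sub>v v = e \<cdot>\<^sub>v v"
    using real_eigen[OF A] Suc.prems(2) unfolding symm_def by blast
  have vv: "v \<bullet> v > 0"
  proof -
    obtain k where k: "k < Suc m" "v $ k \<noteq> 0" using v by (metis carrier_vecD eq_vecI index_zero_vec)
    have "v \<bullet> v = (\<Sum>i<Suc m. v $ i ^ 2)" using v by (simp add: scalar_prod_def lessThan_atLeast0 power2_eq_square)
    also have "\<dots> > 0" by (rule sum_pos2[of _ k]) (use k in auto)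
    finally show ?thesis .
  qed
  define u where "u = (1 / sqrt (v \<bullet> v)) \<cdot>\<^sub>v v"
  have u: "u \<in> carrier_vec (Suc m)" using v by (simp add: u_def)
  have uu: "u \<bullet> u = 1" using vv v
    by (simp add: u_def power2_eq_square[symmetric])
  have Au: "A *\<^sub>v u = e \<cdot>\<^sub>v u" using v A by (simp add: u_def mult_mat_vec smult_smult_assoc mult.commute)
  obtain W where W: "W \<in> carrier_mat (Suc m) (Suc m)" "transpose_mat W * W = 1\<^sub>m (Suc m)" "col W 0 = u"
    using householder[OF u _ uu] by auto
  define A' where "A' = transpose_mat W * A * W"
  have A': "A' \<in> carrier_mat (Suc m) (Suc m)" using W A by (simp add: A'_def)
  have At: "transpose_mat A = A" using symm_transpose[OF A Suc.prems(2)] .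
  have "transpose_mat A' = transpose_mat W * transpose_mat (transpose_mat W * A)"
    unfolding A'_def using W A by (metis transpose_mult mult_carrier_mat transpose_carrier_mat transpose_transpose)
  also have "\<dots> = transpose_mat W * (transpose_mat A * W)"
    using W A by (metis transpose_mult transpose_carrier_mat transpose_transpose)
  also have "\<dots> = A'" unfolding A'_def At using W A by simp
  finally have "transpose_mat A' = A'" .
  hence symA': "symm (Suc m) A'" using transpose_symm[OF A'] by simp
  have col0: "col A' 0 = e \<cdot>\<^sub>v unit_vec (Suc m) 0"
  proof -
    have "col A' 0 = (transpose_mat W * A) *\<^sub>v col W 0" unfolding A'_def
      by (rule col_mult2[of _ "Suc m" "Suc m" _ "Suc m"]) (use W A in auto)
    also have "\<dots> = transpose_mat W *\<^sub>v (A *\<^sub>v u)" using W A u by (simp add: W(3))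
    also have "\<dots> = e \<cdot>\<^sub>v (transpose_mat W *\<^sub>v col W 0)" using W u by (simp add: Au mult_mat_vec)
    also have "transpose_mat W *\<^sub>v col W 0 = col (transpose_mat W * W) 0"
      by (rule col_mult2[symmetric, of _ "Suc m" "Suc m" _ "Suc m"]) (use W in auto)
    also have "\<dots> = unit_vec (Suc m) 0" unfolding W(2) by simp
    finally show ?thesis .
  qed
  have A'col: "A' $$ (i,0) = (if i = 0 then e else 0)" if "i < Suc m" for i
    using arg_cong[OF col0, of "\<lambda>x. x $ i"] that A' by auto
  define A3 where "A3 = mat m m (\<lambda>(i,j). A' $$ (Suc i, Suc j))"
  have A3: "A3 \<in> carrier_mat m m" by (simp add: A3_def)
  have symA3: "symm m A3" using symA' unfolding symm_def A3_def by auto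
  obtain P3 where P3: "P3 \<in> carrier_mat m m" "transpose_mat P3 * P3 = 1\<^sub>m m"
     "diagonal_mat (transpose_mat P3 * A3 * P3)"
    using Suc.IH[OF A3 symA3] by blast
  define E where "E = mat 1 1 (\<lambda>_. e)"
  have E: "E \<in> carrier_mat 1 1" by (simp add: E_def)
  have A'b: "A' = four_block_mat E (0\<^sub>m 1 m) (0\<^sub>m m 1) A3"
  proof (rule eq_matI)
    fix i j assume "i < dim_row (four_block_mat E (0\<^sub>m 1 m) (0\<^sub>m m 1) A3)"
       "j < dim_col (four_block_mat E (0\<^sub>m 1 m) (0\<^sub>m m 1) A3)"
    hence i: "i < Suc m" and j: "j < Suc m" using E A3 by auto
    show "A' $$ (i,j) = four_block_mat E (0\<^sub>m 1 m) (0\<^sub>m m 1) A3 $$ (i,j)"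
    proof (cases "j = 0")
      case True
      thus ?thesis using i A'col E A3 by (auto simp: E_def)
    next
      case False
      hence "A' $$ (i,j) = A' $$ (j,i)" using symA' i j unfolding symm_def by auto
      thus ?thesis using i j False A'col E A3 by (cases i) (auto simp: E_def A3_def)
    qed
  qed (use A' E A3 in auto)
  define X where "X = four_block_mat (1\<^sub>m 1) (0\<^sub>m 1 m) (0\<^sub>m m 1) P3"
  have X: "X \<in> carrier_mat (Suc m) (Suc m)" using four_block_carrier_mat[of "1\<^sub>m 1" 1 1 P3 m m "0\<^sub>m 1 m" "0\<^sub>m m 1"] P3 by (simp add: X_def)
  have Xt: "transpose_mat X = four_block_mat (1\<^sub>m 1) (0\<^sub>m 1 m) (0\<^sub>m m 1) (transpose_mat P3)"
    unfolding X_def using P3 by (subst transpose_four_block_mat) auto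
  have c11: "1\<^sub>m 1 \<in> carrier_mat 1 1" and c1m: "(0\<^sub>m 1 m :: real mat) \<in> carrier_mat 1 m"
    and cm1: "(0\<^sub>m m 1 :: real mat) \<in> carrier_mat m 1" and P3t: "transpose_mat P3 \<in> carrier_mat m m"
    using P3 by auto
  have XX: "transpose_mat X * X = 1\<^sub>m (Suc m)"
  proof -
    have "transpose_mat X * X = four_block_mat (1\<^sub>m 1 * 1\<^sub>m 1 + 0\<^sub>m 1 m * 0\<^sub>m m 1) (1\<^sub>m 1 * 0\<^sub>m 1 m + 0\<^sub>m 1 m * P3)
       (0\<^sub>m m 1 * 1\<^sub>m 1 + transpose_mat P3 * 0\<^sub>m m 1) (0\<^sub>m m 1 * 0\<^sub>m 1 m + transpose_mat P3 * P3)"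
      unfolding Xt unfolding X_def by (rule mult_four_block_mat[OF c11 c1m cm1 P3t c11 c1m cm1 P3(1)])
    also have "\<dots> = four_block_mat (1\<^sub>m 1) (0\<^sub>m 1 m) (0\<^sub>m m 1) (1\<^sub>m m)"
      using P3 by (intro cong_four_block_mat) auto
    also have "\<dots> = 1\<^sub>m (Suc m)" by simp
    finally show ?thesis .
  qed
  define P where "P = W * X"
  have P: "P \<in> carrier_mat (Suc m) (Suc m)" using W X by (simp add: P_def)
  have Pt: "transpose_mat P = transpose_mat X * transpose_mat W"
    unfolding P_def using W X by (simp add: transpose_mult)
  have Xt': "transpose_mat X \<in> carrier_mat (Suc m) (Suc m)" and Wt': "transpose_mat W \<in> carrier_mat (Suc m) (Suc m)"
    using X W by auto
  have "transpose_mat P * P = transpose_mat X * (transpose_mat W * (W * X))"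
    unfolding Pt unfolding P_def by (rule assoc_mult_mat[OF Xt' Wt', of _ "Suc m"]) (use W X in simp)
  also have "transpose_mat W * (W * X) = (transpose_mat W * W) * X"
    by (rule assoc_mult_mat[symmetric, OF Wt' W(1) X])
  also have "\<dots> = X" unfolding W(2) using X by simp
  also have "transpose_mat X * X = 1\<^sub>m (Suc m)" by (rule XX)
  finally have PP: "transpose_mat P * P = 1\<^sub>m (Suc m)" .
  have "transpose_mat P * A * P = transpose_mat X * A' * X"
    unfolding Pt unfolding P_def A'_def by (rule assoc_helper[OF Xt' Wt' A W(1) X])
  also have "\<dots> = four_block_mat E (0\<^sub>m 1 m) (0\<^sub>m m 1) (transpose_mat P3 * A3 * P3)"
  proof -
    have PA: "transpose_mat P3 * A3 \<in> carrier_mat m m" using P3 A3 by simp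
    have "transpose_mat X * A' = four_block_mat (1\<^sub>m 1 * E + 0\<^sub>m 1 m * 0\<^sub>m m 1) (1\<^sub>m 1 * 0\<^sub>m 1 m + 0\<^sub>m 1 m * A3)
       (0\<^sub>m m 1 * E + transpose_mat P3 * 0\<^sub>m m 1) (0\<^sub>m m 1 * 0\<^sub>m 1 m + transpose_mat P3 * A3)"
      unfolding Xt A'b by (rule mult_four_block_mat[OF c11 c1m cm1 P3t E c1m cm1 A3])
    also have "\<dots> = four_block_mat E (0\<^sub>m 1 m) (0\<^sub>m m 1) (transpose_mat P3 * A3)"
      using P3 A3 E by (intro cong_four_block_mat) auto
    finally have 1: "transpose_mat X * A' = four_block_mat E (0\<^sub>m 1 m) (0\<^sub>m m 1) (transpose_mat P3 * A3)" .
    have "four_block_mat E (0\<^sub>m 1 m) (0\<^sub>m m 1) (transpose_mat P3 * A3) * X =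
      four_block_mat (E * 1\<^sub>m 1 + 0\<^sub>m 1 m * 0\<^sub>m m 1) (E * 0\<^sub>m 1 m + 0\<^sub>m 1 m * P3)
       (0\<^sub>m m 1 * 1\<^sub>m 1 + (transpose_mat P3 * A3) * 0\<^sub>m m 1) (0\<^sub>m m 1 * 0\<^sub>m 1 m + (transpose_mat P3 * A3) * P3)"
      unfolding X_def by (rule mult_four_block_mat[OF E c1m cm1 PA c11 c1m cm1 P3(1)])
    also have "\<dots> = four_block_mat E (0\<^sub>m 1 m) (0\<^sub>m m 1) (transpose_mat P3 * A3 * P3)"
      using P3 A3 E by (intro cong_four_block_mat) auto
    finally show ?thesis unfolding 1 .
  qed
  finally have D: "transpose_mat P * A * P = four_block_mat E (0\<^sub>m 1 m) (0\<^sub>m m 1) (transpose_mat P3 * A3 * P3)" .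
  have "diagonal_mat (transpose_mat P * A * P)"
    unfolding D diagonal_mat_def
  proof (intro allI impI)
    fix i j assume ij: "i < dim_row (four_block_mat E (0\<^sub>m 1 m) (0\<^sub>m m 1) (transpose_mat P3 * A3 * P3))"
      "j < dim_col (four_block_mat E (0\<^sub>m 1 m) (0\<^sub>m m 1) (transpose_mat P3 * A3 * P3))" "i \<noteq> j"
    have d: "transpose_mat P3 * A3 * P3 \<in> carrier_mat m m" using P3 A3 by simp
    show "four_block_mat E (0\<^sub>m 1 m) (0\<^sub>m m 1) (transpose_mat P3 * A3 * P3) $$ (i, j) = 0"
      using ij E d P3(3) unfolding diagonal_mat_def by auto
  qed
  with P PP show ?case by blast
qed

lemma nontrivial_solution:
  fixes L :: "real vec list"
  assumes L: "set L \<subseteq> carrier_vec n" and len: "length L < n"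
  shows "\<exists>y \<in> carrier_vec n. y \<noteq> 0\<^sub>v n \<and> (\<forall>l \<in> set L. l \<bullet> y = 0)"
proof -
  define M where "M = mat n n (\<lambda>(i,j). if i < length L then L ! i $ j else 0)"
  have M: "M \<in> carrier_mat n n" by (simp add: M_def)
  have "transpose_mat M *\<^sub>v unit_vec n (n - 1) = 0\<^sub>v n"
  proof (rule eq_vecI)
    fix i assume "i < dim_vec (0\<^sub>v n :: real vec)"
    hence i: "i < n" by simp
    have "(transpose_mat M *\<^sub>v unit_vec n (n - 1)) $ i = (\<Sum>k<n. M $$ (k, i) * unit_vec n (n - 1) $ k)"
      using i M by (simp add: scalar_prod_def lessThan_atLeast0)
    also have "\<dots> = (\<Sum>k<n. M $$ (k, i) * (if k = n - 1 then 1 else 0))"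
      by (rule sum.cong) (use len in auto)
    also have "\<dots> = M $$ (n - 1, i)" using len by (intro sum_delta_right) auto
    also have "\<dots> = 0" using len i by (simp add: M_def)
    finally show "(transpose_mat M *\<^sub>v unit_vec n (n - 1)) $ i = 0\<^sub>v n $ i" using i by simp
  qed (use M in auto)
  moreover have "unit_vec n (n - 1) \<noteq> (0\<^sub>v n :: real vec)"
  proof
    assume "unit_vec n (n - 1) = (0\<^sub>v n :: real vec)"
    hence "unit_vec n (n - 1) $ (n - 1) = (0\<^sub>v n :: real vec) $ (n - 1)" by simp
    thus False using len by simp
  qed
  ultimately have "\<exists>v. v \<in> carrier_vec n \<and> v \<noteq> 0\<^sub>v n \<and> transpose_mat M *\<^sub>v v = 0\<^sub>v n"
    by (intro exI[of _ "unit_vec n (n - 1)"]) auto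
  hence "det (transpose_mat M) = 0"
    using det_0_iff_vec_prod_zero[of "transpose_mat M" n] M by auto
  hence "det M = 0" using det_transpose[OF M] by simp
  then obtain y where y: "y \<in> carrier_vec n" "y \<noteq> 0\<^sub>v n" "M *\<^sub>v y = 0\<^sub>v n"
    using det_0_iff_vec_prod_zero[OF M] by auto
  have "l \<bullet> y = 0" if l: "l \<in> set L" for l
  proof -
    obtain k where k: "k < length L" "l = L ! k" using l by (metis in_set_conv_nth)
    have lc: "l \<in> carrier_vec n" using L l by auto
    have "row M k = l" using k lc len by (intro eq_vecI) (auto simp: M_def)
    moreover have "(M *\<^sub>v y) $ k = row M k \<bullet> y" using k len M by simp
    ultimately show ?thesis using y(3) k len by simp
  qed
  thus ?thesis using y by blast
qed

lemma quad_transform: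
  fixes P M :: "real mat"
  assumes P: "P \<in> carrier_mat n n" and M: "M \<in> carrier_mat n n" and y: "y \<in> carrier_vec n"
  shows "(P *\<^sub>v y) \<bullet> (M *\<^sub>v (P *\<^sub>v y)) = y \<bullet> ((transpose_mat P * M * P) *\<^sub>v y)"
proof -
  have "(P *\<^sub>v y) \<bullet> (M *\<^sub>v (P *\<^sub>v y)) = (transpose_mat (transpose_mat P) *\<^sub>v y) \<bullet> (M *\<^sub>v (P *\<^sub>v y))" by simp
  also have "\<dots> = y \<bullet> (transpose_mat P *\<^sub>v (M *\<^sub>v (P *\<^sub>v y)))"
    by (rule transpose_vec_mult_scalar[of _ n n]) (use P M y in auto)
  also have "transpose_mat P *\<^sub>v (M *\<^sub>v (P *\<^sub>v y)) = (transpose_mat P * M * P) *\<^sub>v y"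
    using P M y by (simp add: assoc_mult_mat_vec[of _ n n _ n])
  finally show ?thesis .
qed

lemma diag_quad:
  fixes D :: "real mat"
  assumes D: "D \<in> carrier_mat n n" "diagonal_mat D" and y: "y \<in> carrier_vec n"
  shows "y \<bullet> (D *\<^sub>v y) = (\<Sum>i<n. D $$ (i,i) * (y $ i)^2)"
proof -
  have "y \<bullet> (D *\<^sub>v y) = (\<Sum>i<n. y $ i * (\<Sum>j<n. D $$ (i,j) * y $ j))"
    using D y by (simp add: scalar_prod_def lessThan_atLeast0)
  also have "\<dots> = (\<Sum>i<n. y $ i * (\<Sum>j<n. (if j = i then 1 else 0) * (D $$ (i,i) * y $ i)))"
    using D unfolding diagonal_mat_def
    by (intro sum.cong refl arg_cong[where f="\<lambda>x. _ * x"]) auto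
  also have "\<dots> = (\<Sum>i<n. D $$ (i,i) * (y $ i)^2)"
    by (intro sum.cong refl) (simp add: sum_delta_left power2_eq_square)
  finally show ?thesis .
qed

lemma proots_linear_prod: "proots (\<Prod>a\<leftarrow>es. [:- a, 1:]) = mset (es :: real list)"
proof (induction es)
  case (Cons a es)
  have "(\<Prod>a\<leftarrow>es. [:- a, 1:]) \<noteq> 0" by (auto simp: prod_list_zero_iff)
  have "proots (\<Prod>a\<leftarrow>a # es. [:- a, 1:]) = proots ([:- a, 1:] * (\<Prod>a\<leftarrow>es. [:- a, 1:]))" by simp
  also have "\<dots> = proots [:- a, 1:] + proots (\<Prod>a\<leftarrow>es. [:- a, 1:])"
    by (rule proots_mult) (use \<open>(\<Prod>a\<leftarrow>es. [:- a, 1:]) \<noteq> 0\<close> in auto)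
  also have "\<dots> = mset (a # es)" using Cons by (simp only: proots_linear_factor) simp
  finally show ?case .
qed simp

lemma diag_data:
  fixes A :: "real mat"
  assumes A: "A \<in> carrier_mat n n" and sA: "symm n A"
  shows "\<exists>P es. P \<in> carrier_mat n n \<and> length es = n \<and> proots (char_poly A) = mset es \<and>
     (\<forall>y \<in> carrier_vec n. (P *\<^sub>v y) \<bullet> (A *\<^sub>v (P *\<^sub>v y)) = (\<Sum>i<n. es ! i * (y $ i)^2)
         \<and> (P *\<^sub>v y) \<bullet> (P *\<^sub>v y) = (\<Sum>i<n. (y $ i)^2)
         \<and> transpose_mat P *\<^sub>v (P *\<^sub>v y) = y)"
proof -
  obtain P where P: "P \<in> carrier_mat n n" "transpose_mat P * P = 1\<^sub>m n"
    "diagonal_mat (transpose_mat P * A * P)" using spectral[OF A sA] by blast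
  define D where "D = transpose_mat P * A * P"
  have D: "D \<in> carrier_mat n n" using P A by (simp add: D_def)
  define es where "es = diag_mat D"
  have les: "length es = n" using D by (simp add: es_def diag_mat_def)
  have esi: "es ! i = D $$ (i,i)" if "i < n" for i using D that by (simp add: es_def diag_mat_def)
  have Pt: "transpose_mat P \<in> carrier_mat n n" using P by simp
  have PPt: "P * transpose_mat P = 1\<^sub>m n" using mat_mult_left_right_inverse[OF Pt P(1) P(2)] .
  have "similar_mat A D"
  proof (rule similar_matI[of A D P "transpose_mat P" n])
    show "{A, D, P, transpose_mat P} \<subseteq> carrier_mat n n" using A D P by auto
    show "P * transpose_mat P = 1\<^sub>m n" by (rule PPt)
    show "transpose_mat P * P = 1\<^sub>m n" by (rule P(2))
    have "P * D * transpose_mat P = (P * transpose_mat P) * A * (P * transpose_mat P)"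
      unfolding D_def using P Pt A by (simp add: assoc_mult_mat[of _ n n _ n _ n])
    also have "\<dots> = A" unfolding PPt using A by simp
    finally show "A = P * D * transpose_mat P" by simp
  qed
  hence "char_poly A = char_poly D" by (rule char_poly_similar)
  also have "\<dots> = (\<Prod>a\<leftarrow>es. [:- a, 1:])" unfolding es_def
    by (rule char_poly_upper_triangular[OF D]) (use P(3) in \<open>auto simp: D_def diagonal_mat_def upper_triangular_def\<close>)
  finally have cp: "proots (char_poly A) = mset es" by (simp add: proots_linear_prod)
  have "(P *\<^sub>v y) \<bullet> (A *\<^sub>v (P *\<^sub>v y)) = (\<Sum>i<n. es ! i * (y $ i)^2)
         \<and> (P *\<^sub>v y) \<bullet> (P *\<^sub>v y) = (\<Sum>i<n. (y $ i)^2)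
         \<and> transpose_mat P *\<^sub>v (P *\<^sub>v y) = y" if y: "y \<in> carrier_vec n" for y
  proof (intro conjI)
    show "(P *\<^sub>v y) \<bullet> (A *\<^sub>v (P *\<^sub>v y)) = (\<Sum>i<n. es ! i * (y $ i)^2)"
      unfolding quad_transform[OF P(1) A y] diag_quad[OF D P(3)[folded D_def] y, unfolded D_def]
      by (intro sum.cong refl) (simp add: esi D_def)
    have "(P *\<^sub>v y) \<bullet> (P *\<^sub>v y) = (P *\<^sub>v y) \<bullet> (1\<^sub>m n *\<^sub>v (P *\<^sub>v y))" using P y by simp
    also have "\<dots> = y \<bullet> ((transpose_mat P * 1\<^sub>m n * P) *\<^sub>v y)" by (rule quad_transform[OF P(1) _ y]) simp
    also have "\<dots> = y \<bullet> y" using P y by simp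
    also have "\<dots> = (\<Sum>i<n. (y $ i)^2)" using y by (simp add: scalar_prod_def lessThan_atLeast0 power2_eq_square)
    finally show "(P *\<^sub>v y) \<bullet> (P *\<^sub>v y) = (\<Sum>i<n. (y $ i)^2)" .
    show "transpose_mat P *\<^sub>v (P *\<^sub>v y) = y" using P y
      by (simp add: assoc_mult_mat_vec[symmetric, of _ n n _ n])
  qed
  thus ?thesis using P les cp by blast
qed

lemma count_bound:
  fixes A P :: "real mat" and es :: "real list" and L :: "real vec list" and \<sigma> c :: real
  assumes A: "A \<in> carrier_mat n n" and P: "P \<in> carrier_mat n n" and les: "length es = n"
    and quad: "\<forall>y \<in> carrier_vec n. (P *\<^sub>v y) \<bullet> (A *\<^sub>v (P *\<^sub>v y)) = (\<Sum>i<n. es ! i * (y $ i)^2)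
         \<and> (P *\<^sub>v y) \<bullet> (P *\<^sub>v y) = (\<Sum>i<n. (y $ i)^2)
         \<and> transpose_mat P *\<^sub>v (P *\<^sub>v y) = y"
    and L: "set L \<subseteq> carrier_vec n"
    and hyp: "\<forall>x \<in> carrier_vec n. x \<noteq> 0\<^sub>v n \<longrightarrow> (\<forall>l\<in>set L. l \<bullet> x = 0) \<longrightarrow>
                 \<sigma> * c * (x \<bullet> x) \<le> \<sigma> * (x \<bullet> (A *\<^sub>v x))"
  shows "card {i. i < n \<and> \<sigma> * es ! i < \<sigma> * c} \<le> length L"
proof (rule ccontr)
  define J where "J = {i. i < n \<and> \<sigma> * es ! i < \<sigma> * c}"
  assume "\<not> card {i. i < n \<and> \<sigma> * es ! i < \<sigma> * c} \<le> length L"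
  hence cJ: "card J > length L" unfolding J_def by simp
  have Jsub: "J \<subseteq> {..<n}" unfolding J_def by auto
  define L' where "L' = map (\<lambda>l. transpose_mat P *\<^sub>v l) L @ map (\<lambda>i. unit_vec n i) (filter (\<lambda>i. i \<notin> J) [0..<n])"
  have "length (filter (\<lambda>i. i \<notin> J) [0..<n]) = card {i. i < length [0..<n] \<and> [0..<n] ! i \<notin> J}"
    by (rule length_filter_conv_card)
  also have "{i. i < length [0..<n] \<and> [0..<n] ! i \<notin> J} = {..<n} - J" by auto
  finally have "length (filter (\<lambda>i. i \<notin> J) [0..<n]) = card ({..<n} - J)" .
  also have "\<dots> = n - card J" using Jsub by (simp add: card_Diff_subset finite_subset)
  finally have lenf: "length (filter (\<lambda>i. i \<notin> J) [0..<n]) = n - card J" .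
  have "card J \<le> n" using card_mono[OF finite_lessThan Jsub] by simp
  hence lenL': "length L' < n" using cJ lenf by (simp add: L'_def)
  have L'c: "set L' \<subseteq> carrier_vec n" using L P by (auto simp: L'_def)
  obtain y where y: "y \<in> carrier_vec n" "y \<noteq> 0\<^sub>v n" "\<forall>l \<in> set L'. l \<bullet> y = 0"
    using nontrivial_solution[OF L'c lenL'] by blast
  have y0: "y $ i = 0" if "i < n" "i \<notin> J" for i
  proof -
    have "unit_vec n i \<in> set L'" using that by (auto simp: L'_def)
    hence "unit_vec n i \<bullet> y = 0" using y by blast
    thus ?thesis using that y by simp
  qed
  define x where "x = P *\<^sub>v y"
  have x: "x \<in> carrier_vec n" using P y by (simp add: x_def)
  have qy: "x \<bullet> (A *\<^sub>v x) = (\<Sum>i<n. es ! i * (y $ i)^2)" "x \<bullet> x = (\<Sum>i<n. (y $ i)^2)"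
     "transpose_mat P *\<^sub>v x = y" using quad y(1) unfolding x_def by auto
  have x0: "x \<noteq> 0\<^sub>v n"
  proof
    assume "x = 0\<^sub>v n"
    hence "transpose_mat P *\<^sub>v x = 0\<^sub>v n" using P
      by (intro eq_vecI) (auto intro!: scalar_prod_right_zero[of _ n])
    thus False using qy(3) y(2) by simp
  qed
  have xL: "\<forall>l\<in>set L. l \<bullet> x = 0"
  proof
    fix l assume l: "l \<in> set L"
    have "(transpose_mat P *\<^sub>v l) \<bullet> y = l \<bullet> (P *\<^sub>v y)"
      by (rule transpose_vec_mult_scalar[of _ n n]) (use P y L l in auto)
    moreover have "(transpose_mat P *\<^sub>v l) \<bullet> y = 0" using y(3) l by (auto simp: L'_def)
    ultimately show "l \<bullet> x = 0" by (simp add: x_def)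
  qed
  have ge: "\<sigma> * c * (x \<bullet> x) \<le> \<sigma> * (x \<bullet> (A *\<^sub>v x))" using hyp x x0 xL by blast
  obtain k where k: "k < n" "y $ k \<noteq> 0" using y by (metis carrier_vecD eq_vecI index_zero_vec)
  have kJ: "k \<in> J" using y0 k by blast
  have "(\<Sum>i<n. \<sigma> * es ! i * (y $ i)^2) < (\<Sum>i<n. \<sigma> * c * (y $ i)^2)"
  proof (rule sum_strict_mono_ex1)
    show "\<forall>i\<in>{..<n}. \<sigma> * es ! i * (y $ i)^2 \<le> \<sigma> * c * (y $ i)^2"
    proof
      fix i assume i: "i \<in> {..<n}"
      show "\<sigma> * es ! i * (y $ i)^2 \<le> \<sigma> * c * (y $ i)^2"
      proof (cases "i \<in> J")
        case True
        hence "\<sigma> * es ! i < \<sigma> * c" by (simp add: J_def)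
        thus ?thesis by (intro mult_right_mono) auto
      next
        case False thus ?thesis using y0 i by simp
      qed
    qed
    show "\<exists>i\<in>{..<n}. \<sigma> * es ! i * (y $ i)^2 < \<sigma> * c * (y $ i)^2"
    proof (intro bexI[of _ k])
      have "\<sigma> * es ! k < \<sigma> * c" using kJ by (simp add: J_def)
      moreover have "(y $ k)^2 > 0" using k by simp
      ultimately show "\<sigma> * es ! k * (y $ k)^2 < \<sigma> * c * (y $ k)^2" by (intro mult_strict_right_mono)
    qed (use k in auto)
  qed simp
  hence "\<sigma> * (x \<bullet> (A *\<^sub>v x)) < \<sigma> * c * (x \<bullet> x)"
    unfolding qy by (simp add: sum_distrib_left mult.assoc)
  with ge show False by simp
qed

lemma sum_restrict_n:
  assumes "C \<subseteq> {..<(n::nat)}"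
  shows "(\<Sum>u\<in>C. g u) = (\<Sum>u<n. if u \<in> C then g u else (0::real))"
proof -
  have "(\<Sum>u<n. if u \<in> C then g u else 0) = (\<Sum>u\<in>{..<n} \<inter> C. g u)"
    by (rule sum.inter_restrict[symmetric]) simp
  also have "{..<n} \<inter> C = C" using assms by auto
  finally show ?thesis by simp
qed

lemma clique_count:
  assumes sg: "simple_graph n E" and cp: "clique_partition n E F" and u: "u < n" and v: "v < n"
  shows "real (card {C \<in> F. u \<in> C \<and> v \<in> C}) =
     (if u = v then real (clique_degree F u) else if E u v then 1 else 0)"
proof (cases "u = v")
  case True thus ?thesis by (simp add: clique_degree_def)
next
  case False
  show ?thesis
  proof (cases "E u v")
    case True
    then obtain C0 where C0: "C0 \<in> F" "u \<in> C0" "v \<in> C0" and un: "\<And>C. C \<in> F \<and> u \<in> C \<and> v \<in> C \<Longrightarrow> C = C0"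
      using cp u v unfolding clique_partition_def by metis
    have "{C \<in> F. u \<in> C \<and> v \<in> C} = {C0}" using C0 un by blast
    thus ?thesis using False True by simp
  next
    case F: False
    have e: "{C \<in> F. u \<in> C \<and> v \<in> C} = {}"
      using cp False F unfolding clique_partition_def is_clique_def by blast
    have "card {C \<in> F. u \<in> C \<and> v \<in> C} = 0" unfolding e by simp
    thus ?thesis using False F by simp
  qed
qed

lemma graph_quad:
  fixes x :: "nat \<Rightarrow> real"
  assumes sg: "simple_graph n E" and cp: "clique_partition n E F"
  shows "(\<Sum>u<n. x u * (\<Sum>v<n. (if E u v then 1 else 0) * x v)) + (\<Sum>u<n. real (clique_degree F u) * (x u)^2)
       = (\<Sum>C\<in>F. (\<Sum>u\<in>C. x u)^2)"
proof -
  have Fsub: "\<And>C. C \<in> F \<Longrightarrow> C \<subseteq> {..<n}" using cp unfolding clique_partition_def is_clique_def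
    by (auto simp: lessThan_atLeast0)
  have finF: "finite F"
  proof -
    have "F \<subseteq> Pow {..<n}" using Fsub by auto
    thus ?thesis by (rule finite_subset) simp
  qed
  have "(\<Sum>C\<in>F. (\<Sum>u\<in>C. x u)^2) = (\<Sum>C\<in>F. \<Sum>u<n. \<Sum>v<n. if u \<in> C \<and> v \<in> C then x u * x v else 0)"
  proof (rule sum.cong[OF refl])
    fix C assume C: "C \<in> F"
    have "(\<Sum>u\<in>C. x u)^2 = (\<Sum>u\<in>C. \<Sum>v\<in>C. x u * x v)"
      by (simp add: power2_eq_square sum_product)
    also have "\<dots> = (\<Sum>u<n. if u \<in> C then (\<Sum>v\<in>C. x u * x v) else 0)"
      by (rule sum_restrict_n[OF Fsub[OF C]])
    also have "\<dots> = (\<Sum>u<n. \<Sum>v<n. if u \<in> C \<and> v \<in> C then x u * x v else 0)"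
    proof (rule sum.cong[OF refl])
      fix u
      show "(if u \<in> C then (\<Sum>v\<in>C. x u * x v) else 0) = (\<Sum>v<n. if u \<in> C \<and> v \<in> C then x u * x v else 0)"
        using sum_restrict_n[OF Fsub[OF C], of "\<lambda>v. x u * x v"] by auto
    qed
    finally show "(\<Sum>u\<in>C. x u)^2 = (\<Sum>u<n. \<Sum>v<n. if u \<in> C \<and> v \<in> C then x u * x v else 0)" .
  qed
  also have "\<dots> = (\<Sum>u<n. \<Sum>C\<in>F. \<Sum>v<n. if u \<in> C \<and> v \<in> C then x u * x v else 0)"
    by (rule sum.swap)
  also have "\<dots> = (\<Sum>u<n. \<Sum>v<n. \<Sum>C\<in>F. if u \<in> C \<and> v \<in> C then x u * x v else 0)"
    by (rule sum.cong[OF refl], rule sum.swap)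
  also have "\<dots> = (\<Sum>u<n. \<Sum>v<n. x u * x v * real (card {C \<in> F. u \<in> C \<and> v \<in> C}))"
  proof (intro sum.cong refl)
    fix u v
    have "(\<Sum>C\<in>F. if u \<in> C \<and> v \<in> C then x u * x v else 0) = (\<Sum>C\<in>F \<inter> {C. u \<in> C \<and> v \<in> C}. x u * x v)"
      using sum.inter_restrict[OF finF, of "\<lambda>C. x u * x v" "{C. u \<in> C \<and> v \<in> C}"] by simp
    also have "F \<inter> {C. u \<in> C \<and> v \<in> C} = {C \<in> F. u \<in> C \<and> v \<in> C}" by auto
    finally show "(\<Sum>C\<in>F. if u \<in> C \<and> v \<in> C then x u * x v else 0) = x u * x v * real (card {C \<in> F. u \<in> C \<and> v \<in> C})"
      by simp
  qed
  also have "\<dots> = (\<Sum>u<n. \<Sum>v<n. x u * x v * (if u = v then real (clique_degree F u) else if E u v then 1 else 0))"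
    by (intro sum.cong refl) (simp add: clique_count[OF sg cp])
  also have "\<dots> = (\<Sum>u<n. x u * (\<Sum>v<n. (if E u v then 1 else 0) * x v) + real (clique_degree F u) * (x u)^2)"
  proof (rule sum.cong[OF refl])
    fix u assume u: "u \<in> {..<n}"
    have nE: "\<not> E u u" using sg u unfolding simple_graph_def by auto
    have "(\<Sum>v<n. x u * x v * (if u = v then real (clique_degree F u) else if E u v then 1 else 0))
       = (\<Sum>v<n. x u * ((if E u v then 1 else 0) * x v) + (if v = u then 1 else 0) * (real (clique_degree F u) * (x u)^2))"
      by (rule sum.cong[OF refl]) (auto simp: nE power2_eq_square)
    also have "\<dots> = x u * (\<Sum>v<n. (if E u v then 1 else 0) * x v) + real (clique_degree F u) * (x u)^2"
      using u by (simp add: sum.distrib sum_distrib_left sum_delta_left)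
    finally show "(\<Sum>v<n. x u * x v * (if u = v then real (clique_degree F u) else if E u v then 1 else 0))
       = x u * (\<Sum>v<n. (if E u v then 1 else 0) * x v) + real (clique_degree F u) * (x u)^2" .
  qed
  also have "\<dots> = (\<Sum>u<n. x u * (\<Sum>v<n. (if E u v then 1 else 0) * x v)) + (\<Sum>u<n. real (clique_degree F u) * (x u)^2)"
    by (rule sum.distrib)
  finally show ?thesis by simp
qed

lemma len_filter_sort: "length (filter P (sort xs)) = length (filter P xs)"
  by (metis mset_filter mset_sort size_mset)

lemma G1:
  fixes xs :: "'a :: linorder list"
  assumes i: "i < length xs"
  shows "length (filter (\<lambda>x. rev (sort xs) ! i < x) xs) \<le> i"
proof -
  define s where "s = sort xs"
  have ls: "length s = length xs" by (simp add: s_def)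
  have so: "sorted s" by (simp add: s_def)
  let ?t = "rev s ! i"
  have "length (filter (\<lambda>x. ?t < x) xs) = length (filter (\<lambda>x. ?t < x) (rev s))"
    by (simp add: s_def len_filter_sort rev_filter[symmetric])
  also have "\<dots> = card {j. j < length (rev s) \<and> ?t < rev s ! j}" by (rule length_filter_conv_card)
  also have "\<dots> \<le> card {..<i}"
  proof (rule card_mono)
    show "{j. j < length (rev s) \<and> ?t < rev s ! j} \<subseteq> {..<i}"
    proof
      fix j assume j: "j \<in> {j. j < length (rev s) \<and> ?t < rev s ! j}"
      show "j \<in> {..<i}"
      proof (rule ccontr)
        assume "j \<notin> {..<i}"
        hence ij: "i \<le> j" by simp
        have jl: "j < length s" using j by simp
        have "rev s ! j = s ! (length s - Suc j)" using jl by (simp add: rev_nth)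
        also have "\<dots> \<le> s ! (length s - Suc i)"
          by (rule sorted_nth_mono[OF so]) (use ij jl in auto)
        also have "\<dots> = ?t" using i ls by (simp add: rev_nth)
        finally show False using j by (simp add: not_less[symmetric])
      qed
    qed
  qed simp
  finally show ?thesis unfolding s_def by simp
qed

lemma G2:
  fixes xs :: "real list"
  assumes i: "i < length xs" and c: "sort xs ! i < c"
  shows "i + 1 \<le> length (filter (\<lambda>x. x < c) xs)"
proof -
  define s where "s = sort xs"
  have ls: "length s = length xs" by (simp add: s_def)
  have so: "sorted s" by (simp add: s_def)
  have "card {..<i+1} \<le> card {j. j < length s \<and> s ! j < c}"
  proof (rule card_mono)
    show "finite {j. j < length s \<and> s ! j < c}" by simp
    show "{..<i+1} \<subseteq> {j. j < length s \<and> s ! j < c}"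
    proof
      fix j assume "j \<in> {..<i+1}"
      hence j: "j \<le> i" by simp
      have "s ! j \<le> s ! i" by (rule sorted_nth_mono[OF so j]) (use i ls in simp)
      thus "j \<in> {j. j < length s \<and> s ! j < c}" using c j i ls by (simp add: s_def)
    qed
  qed
  also have "\<dots> = length (filter (\<lambda>x. x < c) s)" by (rule length_filter_conv_card[symmetric])
  finally show ?thesis by (simp add: s_def len_filter_sort)
qed

lemma G3:
  fixes xs :: "real list"
  assumes i: "i < length xs" and c: "c < sort xs ! i"
  shows "length xs - i \<le> length (filter (\<lambda>x. c < x) xs)"
proof -
  define s where "s = sort xs"
  have ls: "length s = length xs" by (simp add: s_def)
  have so: "sorted s" by (simp add: s_def)
  have "card {i..<length xs} \<le> card {j. j < length s \<and> c < s ! j}"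
  proof (rule card_mono)
    show "finite {j. j < length s \<and> c < s ! j}" by simp
    show "{i..<length xs} \<subseteq> {j. j < length s \<and> c < s ! j}"
    proof
      fix j assume "j \<in> {i..<length xs}"
      hence j: "i \<le> j" "j < length xs" by auto
      have "s ! i \<le> s ! j" by (rule sorted_nth_mono[OF so j(1)]) (use j ls in simp)
      thus "j \<in> {j. j < length s \<and> c < s ! j}" using c j ls by (simp add: s_def)
    qed
  qed
  also have "\<dots> = length (filter (\<lambda>x. c < x) s)" by (rule length_filter_conv_card[symmetric])
  finally show ?thesis by (simp add: s_def len_filter_sort)
qed


theorem mainTheorem5:
  fixes n :: nat and E :: "nat \<Rightarrow> nat \<Rightarrow> bool" and F :: "nat set set"
  assumes "simple_graph n E"
    and "clique_partition n E F"
  shows "(\<forall>i. 1 \<le> i \<and> i \<le> neg_inertia n E \<longrightarrow>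
            adj_eig n E (n - i + 1) \<ge> - real (sorted_clique_degree n F i))
       \<and> (clique_regular n F \<and> int (neg_inertia n E) = int n - int (card F) \<longrightarrow>
            (\<forall>i. 1 \<le> i \<and> i \<le> neg_inertia n E \<longrightarrow>
              adj_eig n E (n - i + 1) = - real (sorted_clique_degree n F i)))"
proof -
  note sg = assms(1) and cp = assms(2)
  define A where "A = adj_matrix n E"
  have A: "A \<in> carrier_mat n n" by (simp add: A_def adj_matrix_def)
  have sA: "symm n A" using sg unfolding symm_def A_def adj_matrix_def simple_graph_def by auto
  obtain P es where P: "P \<in> carrier_mat n n" and les: "length es = n"
    and cpA: "proots (char_poly A) = mset es"
    and quad: "\<forall>y \<in> carrier_vec n. (P *\<^sub>v y) \<bullet> (A *\<^sub>v (P *\<^sub>v y)) = (\<Sum>i<n. es ! i * (y $ i)^2)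
         \<and> (P *\<^sub>v y) \<bullet> (P *\<^sub>v y) = (\<Sum>i<n. (y $ i)^2)
         \<and> transpose_mat P *\<^sub>v (P *\<^sub>v y) = y"
    using diag_data[OF A sA] by blast
  have ev: "adj_eigenvalues n E = mset es" using cpA by (simp add: adj_eigenvalues_def A_def)
  have eig: "adj_eig n E k = rev (sort es) ! (k - 1)" for k by (simp add: adj_eig_def ev)
  have nu_le: "neg_inertia n E \<le> n"
    unfolding neg_inertia_def ev using les by (metis size_filter_mset_lesseq size_mset)
  define d where "d = clique_degree F"
  define ds where "ds = map d [0..<n]"
  have lds: "length ds = n" by (simp add: ds_def)
  have scd: "sorted_clique_degree n F i = rev (sort ds) ! (i - 1)" for i
    by (simp add: sorted_clique_degree_def ds_def d_def)
  have Fsub: "\<And>C. C \<in> F \<Longrightarrow> C \<subseteq> {..<n}" using cp unfolding clique_partition_def is_clique_def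
    by (auto simp: lessThan_atLeast0)
  have finF: "finite F"
  proof -
    have "F \<subseteq> Pow {..<n}" using Fsub by auto
    thus ?thesis by (rule finite_subset) simp
  qed
  have qA: "x \<bullet> (A *\<^sub>v x) = (\<Sum>C\<in>F. (\<Sum>u\<in>C. x $ u)^2) - (\<Sum>u<n. real (d u) * (x $ u)^2)"
    if x: "x \<in> carrier_vec n" for x
  proof -
    have "x \<bullet> (A *\<^sub>v x) = (\<Sum>u<n. x $ u * (\<Sum>v<n. (if E u v then 1 else 0) * x $ v))"
      using x A by (simp add: scalar_prod_def lessThan_atLeast0 A_def adj_matrix_def)
    thus ?thesis using graph_quad[OF sg cp, of "\<lambda>u. x $ u"] by (simp add: d_def)
  qed
  have xx: "x \<bullet> x = (\<Sum>u<n. (x $ u)^2)" if x: "x \<in> carrier_vec n" for x :: "real vec"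
    using x by (simp add: scalar_prod_def lessThan_atLeast0 power2_eq_square)
  have part1: "adj_eig n E (n - i + 1) \<ge> - real (sorted_clique_degree n F i)"
    if i: "1 \<le> i" "i \<le> neg_inertia n E" for i
  proof -
    have iN: "i \<le> n" using i nu_le by simp
    define t where "t = sorted_clique_degree n F i"
    define L where "L = map (\<lambda>v. unit_vec n v :: real vec) (filter (\<lambda>v. t < d v) [0..<n])"
    have Lc: "set L \<subseteq> carrier_vec n" by (auto simp: L_def)
    have "length L = length (filter (\<lambda>x. t < x) ds)"
      by (simp add: L_def ds_def filter_map o_def)
    also have "\<dots> \<le> i - 1" unfolding t_def scd using G1[of "i - 1" ds] i iN lds by simp
    finally have lenL: "length L \<le> i - 1" .
    have hyp: "\<forall>x \<in> carrier_vec n. x \<noteq> 0\<^sub>v n \<longrightarrow> (\<forall>l\<in>set L. l \<bullet> x = 0) \<longrightarrow>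
                 1 * (- real t) * (x \<bullet> x) \<le> 1 * (x \<bullet> (A *\<^sub>v x))"
    proof (intro ballI impI)
      fix x :: "real vec" assume x: "x \<in> carrier_vec n" and xL: "\<forall>l\<in>set L. l \<bullet> x = 0"
      have x0: "x $ v = 0" if "v < n" "t < d v" for v
      proof -
        have "unit_vec n v \<in> set L" using that by (auto simp: L_def)
        hence "unit_vec n v \<bullet> x = 0" using xL by blast
        thus ?thesis using that x by simp
      qed
      have "(\<Sum>u<n. real (d u) * (x $ u)^2) \<le> (\<Sum>u<n. real t * (x $ u)^2)"
      proof (rule sum_mono)
        fix u assume u: "u \<in> {..<n}"
        show "real (d u) * (x $ u)^2 \<le> real t * (x $ u)^2"
        proof (cases "t < d u")
          case True thus ?thesis using x0 u by simp
        next
          case False thus ?thesis by (intro mult_right_mono) auto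
        qed
      qed
      moreover have "(\<Sum>C\<in>F. (\<Sum>u\<in>C. x $ u)^2) \<ge> 0" by (intro sum_nonneg) auto
      ultimately show "1 * (- real t) * (x \<bullet> x) \<le> 1 * (x \<bullet> (A *\<^sub>v x))"
        unfolding qA[OF x] xx[OF x] by (simp add: sum_distrib_left sum_negf)
    qed
    have "card {j. j < n \<and> 1 * es ! j < 1 * (- real t)} \<le> length L"
      by (rule count_bound[OF A P les quad Lc hyp])
    hence "length (filter (\<lambda>x. x < - real t) es) \<le> i - 1"
      using lenL les by (simp add: length_filter_conv_card)
    moreover have "\<not> sort es ! (i - 1) < - real t"
    proof
      assume "sort es ! (i - 1) < - real t"
      from G2[OF _ this] have "i - 1 + 1 \<le> length (filter (\<lambda>x. x < - real t) es)" using les i iN by simp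
      with calculation i show False by simp
    qed
    moreover have "adj_eig n E (n - i + 1) = sort es ! (i - 1)"
      unfolding eig using les i iN by (simp add: rev_nth)
    ultimately show ?thesis unfolding t_def by simp
  qed
  have part2: "adj_eig n E (n - i + 1) = - real (sorted_clique_degree n F i)"
    if reg: "clique_regular n F" and nu: "int (neg_inertia n E) = int n - int (card F)"
      and i: "1 \<le> i" "i \<le> neg_inertia n E" for i
  proof -
    obtain k where k: "\<And>v. v < n \<Longrightarrow> d v = k" using reg unfolding clique_regular_def d_def by blast
    have iN: "i \<le> n" using i nu_le by simp
    have nuF: "neg_inertia n E + card F = n" using nu by simp
    have "sorted_clique_degree n F i \<in> set ds"
    proof -
      have "rev (sort ds) ! (i - 1) \<in> set (rev (sort ds))" using i iN lds by (intro nth_mem) simp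
      thus ?thesis by (simp add: scd)
    qed
    hence tk: "sorted_clique_degree n F i = k" using k by (auto simp: ds_def)
    obtain Fl where Fl: "set Fl = F" "distinct Fl" using finite_distinct_list[OF finF] by blast
    define L where "L = map (\<lambda>C. vec n (\<lambda>v. if v \<in> C then 1 else 0) :: real vec) Fl"
    have Lc: "set L \<subseteq> carrier_vec n" by (auto simp: L_def)
    have lenL: "length L = card F" using Fl distinct_card[of Fl] by (simp add: L_def)
    have hyp: "\<forall>x \<in> carrier_vec n. x \<noteq> 0\<^sub>v n \<longrightarrow> (\<forall>l\<in>set L. l \<bullet> x = 0) \<longrightarrow>
                 (-1) * (- real k) * (x \<bullet> x) \<le> (-1) * (x \<bullet> (A *\<^sub>v x))"
    proof (intro ballI impI)
      fix x :: "real vec" assume x: "x \<in> carrier_vec n" and xL: "\<forall>l\<in>set L. l \<bullet> x = 0"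
      have "(\<Sum>u\<in>C. x $ u) = 0" if C: "C \<in> F" for C
      proof -
        have "vec n (\<lambda>v. if v \<in> C then 1 else 0) \<in> set L" using C Fl by (auto simp: L_def)
        hence "vec n (\<lambda>v. if v \<in> C then 1 else 0) \<bullet> x = 0" using xL by blast
        hence "(\<Sum>v<n. (if v \<in> C then 1 else 0) * x $ v) = 0"
          using x by (simp add: scalar_prod_def lessThan_atLeast0)
        moreover have "(\<Sum>u\<in>C. x $ u) = (\<Sum>v<n. if v \<in> C then x $ v else 0)"
          by (rule sum_restrict_n[OF Fsub[OF C]])
        moreover have "(\<Sum>v<n. (if v \<in> C then 1 else 0) * x $ v) = (\<Sum>v<n. if v \<in> C then x $ v else 0)"
          by (rule sum.cong) auto
        ultimately show ?thesis by simp
      qed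
      hence "(\<Sum>C\<in>F. (\<Sum>u\<in>C. x $ u)^2) = 0" by simp
      moreover have "(\<Sum>u<n. real (d u) * (x $ u)^2) = (\<Sum>u<n. real k * (x $ u)^2)"
        using k by simp
      ultimately show "(-1) * (- real k) * (x \<bullet> x) \<le> (-1) * (x \<bullet> (A *\<^sub>v x))"
        unfolding qA[OF x] xx[OF x] by (simp add: sum_distrib_left sum_negf)
    qed
    have "card {j. j < n \<and> (-1) * es ! j < (-1) * (- real k)} \<le> length L"
      by (rule count_bound[OF A P les quad Lc hyp])
    hence cnt: "length (filter (\<lambda>x. - real k < x) es) \<le> card F"
      using lenL les by (simp add: length_filter_conv_card minus_less_iff)
    have "\<not> - real k < sort es ! (i - 1)"
    proof
      assume "- real k < sort es ! (i - 1)"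
      from G3[OF _ this] have "n - (i - 1) \<le> length (filter (\<lambda>x. - real k < x) es)" using les i iN by simp
      with cnt nuF i show False by simp
    qed
    moreover have "adj_eig n E (n - i + 1) = sort es ! (i - 1)"
      unfolding eig using les i iN by (simp add: rev_nth)
    moreover have "adj_eig n E (n - i + 1) \<ge> - real k" using part1[OF i] tk by simp
    ultimately show ?thesis using tk by simp
  qed
  show ?thesis using part1 part2 by blast
qed
end
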